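(* For each positive integer $N$, let $$f^{(2)}(N)=\{\, y\in\mathbb{R} \;:\; y\equiv \sqrt{2n} \pmod 1 \text{ for some } n\in\mathbb{N},\ 2n\le N,\ \sqrt{2n}\notin\mathbb{N}\,\},$$ the set of fractional parts of $\sqrt{2n}$ (for $2n\le N$ not a perfect square), extended periodically with period $1$. For a set $A\subset\mathbb{R}$ and $x\in\mathbb{R}$ define $$\operatorname{gap}_x(A)=\inf\{y\in A: y>x\}-\sup\{y\in A: y<x\},$$ and set $G^{(2)}(x)=\lim_{N\to\infty}2\sqrt{N}\,\operatorname{gap}_x(f^{(2)}(N))$. Then for coprime integers $p,q$ with $q\ge 2$, $$G^{(2)}\!\left(\tfrac{p}{q}\right)=\begin{cases}\frac{4}{q} & q\equiv 2 \pmod 4,\\ \frac{2}{q} & q\equiv 0 \pmod 4,\\ \frac{1}{q} & q\equiv 1 \pmod 2.\end{cases}$$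
   Context: $\mathbb{N}$ denotes the positive integers. The fractional part of a real number $t$ is $t-\lfloor t\rfloor$. *)

theory Defs
  imports Complex_Main
begin

definition f2 :: "nat \<Rightarrow> real set" where
  "f2 N = {y. \<exists>n::nat. n \<ge> 1 \<and> 2 * n \<le> N \<and> sqrt (real (2 * n)) \<notin> \<nat> \<and>
                  y - sqrt (real (2 * n)) \<in> \<int>}"

definition gap :: "real \<Rightarrow> real set \<Rightarrow> real" where
  "gap x A = Inf {y \<in> A. y > x} - Sup {y \<in> A. y < x}"

end

theory Submission
  imports Defs
begin


definition LL :: "int \<Rightarrow> int" where
  "LL q = (if q mod 4 = 2 then 4*q else if q mod 4 = 0 then 2*q else q)"

lemma bez:
  fixes p q :: int assumes "coprime p q"
  obtains u v where "u*p + v*q = 1"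
  using bezout_int[of p q] assms by auto

lemma LL_dvd_M:
  fixes q :: int shows "LL q dvd 2*q^2"
proof -
  have "q mod 4 = 2 \<Longrightarrow> 4*q dvd 2*q^2"
  proof -
    assume "q mod 4 = 2" then have t: "q = 4*(q div 4)+2" using div_mult_mod_eq[of q 4] by linarith
    have "2*q^2 = 4*q*(2*(q div 4)+1)" by (subst (1 2) t) (simp add: power2_eq_square algebra_simps)
    then show ?thesis by (metis dvd_triv_left)
  qed
  moreover have "q mod 4 = 0 \<Longrightarrow> 2*q dvd 2*q^2" by (simp add: power2_eq_square)
  moreover have "q dvd 2*q^2" by (simp add: power2_eq_square)
  ultimately show ?thesis unfolding LL_def by auto
qed

lemma LL_dvd_sq:
  fixes p q k :: int assumes "coprime p q" "q \<ge> 2"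
  shows "LL q dvd (p + k*q)^2 - p^2"
proof -
  have e: "(p + k*q)^2 - p^2 = q*(2*p*k + q*k^2)" by (simp add: power2_eq_square algebra_simps)
  consider "q mod 4 = 2" | "q mod 4 = 0" | "q mod 4 \<noteq> 2 \<and> q mod 4 \<noteq> 0" by blast
  then show ?thesis
  proof cases
    case 1
    define t where "t = q div 4"
    have t: "q = 4*t+2" using 1 div_mult_mod_eq[of q 4] unfolding t_def by linarith
    have eq: "even q" using t by simp
    have qo: "odd p"
    proof
      assume "even p"
      with eq have "is_unit (2::int)" using assms(1) coprime_common_divisor by blast
      then show False by simp
    qed
    have "4 dvd 2*p*k + q*k^2"
    proof (cases "even k")
      case True then obtain j where j: "k = 2*j" by auto
      have "2*p*k + q*k^2 = 4*(p*j+4*t*j*j+2*j*j)" unfolding j t by (simp add: power2_eq_square algebra_simps)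
      then show ?thesis by simp
    next
      case False then obtain j where j: "k = 2*j+1" using oddE by blast
      obtain w where w: "p = 2*w+1" using qo oddE by blast
      have "2*p*k + q*k^2 = 4*(w*2*j + w + 3*j + 4*t*j*j+4*t*j+t+2*j*j+1)" unfolding j t w
        by (simp add: power2_eq_square algebra_simps)
      then show ?thesis by simp
    qed
    moreover have "LL q = q*4" using 1 by (simp add: LL_def)
    ultimately show ?thesis unfolding e using mult_dvd_mono[OF dvd_refl[of q]] by metis
  next
    case 2
    have "4 dvd q" using 2 by (simp add: dvd_eq_mod_eq_0)
    then have "even q" by (rule dvd_trans[rotated]) simp
    then have "2 dvd 2*p*k + q*k^2" by simp
    moreover have "LL q = q*2" using 2 by (simp add: LL_def)
    ultimately show ?thesis unfolding e using mult_dvd_mono[OF dvd_refl[of q]] by metis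
  next
    case 3 then have "LL q = q" by (simp add: LL_def)
    then show ?thesis unfolding e by simp
  qed
qed

lemma LL_ndvd:
  fixes p q :: int assumes "coprime p q" "q \<ge> 2"
  shows "\<not> LL q dvd p^2"
proof
  assume "LL q dvd p^2"
  moreover have "q dvd LL q" unfolding LL_def by auto
  ultimately have "q dvd p^2" by (rule dvd_trans[rotated])
  moreover have "coprime (p^2) q" using assms(1) by simp
  ultimately have "q dvd 1" using coprime_common_divisor[of "p^2" q q] by simp
  then have "q \<le> 1" using zdvd_imp_le by simp
  then show False using assms(2) by simp
qed

lemma G:
  fixes p q c :: int assumes "coprime p q"
  shows "\<exists>j. 2*q dvd 4*(c + p*j)"
proof -
  obtain u v where uv: "u*p + v*q = 1" using bez[OF assms] by blast
  have up: "u*p = 1 - v*q" using uv by simp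
  have "4*(c + p*(-u*c)) = 4*c*(1 - u*p)" by (simp add: algebra_simps)
  also have "\<dots> = 2*q*(2*c*v)" unfolding up by (simp add: algebra_simps)
  finally have "4*(c + p*(-u*c)) = 2*q*(2*c*v)" .
  then show ?thesis by (metis dvd_triv_left)
qed

lemma EX:
  fixes p q z :: int assumes cop: "coprime p q" and q2: "q \<ge> 2" and dv: "LL q dvd z - p^2"
  shows "\<exists>k. 2*q^2 dvd (p + k*q)^2 - z"
proof -
  obtain w' where w': "z - p^2 = LL q * w'" using dv by (elim dvdE)
  define w where "w = -w'"
  have w: "p^2 - z = LL q * w" using w' unfolding w_def by simp
  have e: "(p+k*q)^2 - z = LL q * w + q*(2*p*k + q*k^2)" for k
  proof -
    have "(p+k*q)^2 - z = (p^2 - z) + q*(2*p*k+q*k^2)" by (simp add: power2_eq_square algebra_simps)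
    then show ?thesis unfolding w .
  qed
  have red: "2*q^2 dvd q*X" if "2*q dvd X" for X
  proof -
    have "q*(2*q) dvd q*X" using that by (rule mult_dvd_mono[OF dvd_refl])
    then show ?thesis by (simp add: power2_eq_square mult.assoc mult.left_commute)
  qed
  have G2: "2*q dvd 4*(c + p*j) + 4*q*j^2 + 4*q*j" "2*q dvd 4*(c + p*j) + 4*q*j^2" if "2*q dvd 4*(c + p*j)" for c j
  proof -
    have "2*q dvd 4*q*j^2" by (metis dvd_triv_left mult.commute mult.left_commute mult_2 numeral_Bit0 dvd_mult2)
    moreover have "2*q dvd 4*q*j" by (metis dvd_triv_left mult.commute mult.left_commute mult_2 numeral_Bit0 dvd_mult2)
    ultimately show "2*q dvd 4*(c + p*j) + 4*q*j^2 + 4*q*j" "2*q dvd 4*(c + p*j) + 4*q*j^2" using that by simp_all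
  qed
  consider "q mod 4 = 2" | "q mod 4 = 0" | "q mod 4 \<noteq> 2 \<and> q mod 4 \<noteq> 0" by blast
  then show ?thesis
  proof cases
    case 1
    then have L: "LL q = q*4" by (simp add: LL_def)
    obtain j where j: "2*q dvd 4*(w + p*j)" using G[OF cop] by blast
    have "2*q dvd 4*(w + p*j) + 4*q*j^2 " using G2(2)[OF j] by simp
    moreover have "4*(w + p*j) + 4*q*j^2 = 4*w + (2*p*(2*j) + q*(2*j)^2)" by (simp add: power2_eq_square algebra_simps)
    ultimately have "2*q^2 dvd q*(4*w + (2*p*(2*j) + q*(2*j)^2))" using red by metis
    moreover have "q*(4*w + (2*p*(2*j) + q*(2*j)^2)) = (p+(2*j)*q)^2 - z" unfolding e L by (simp add: algebra_simps)
    ultimately show ?thesis by metis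
  next
    case 2
    then have L: "LL q = q*2" by (simp add: LL_def)
    have "4 dvd q" using 2 by (simp add: dvd_eq_mod_eq_0)
    then obtain t where t: "q = 4*t" by (elim dvdE)
    show ?thesis
    proof (cases "even w")
      case True
      then obtain c where c: "w = 2*c" by (elim evenE)
      obtain j where j: "2*q dvd 4*(c + p*j)" using G[OF cop] by blast
      have "2*q dvd 4*(c + p*j) + 4*q*j^2 " using G2(2)[OF j] by simp
      moreover have "4*(c + p*j) + 4*q*j^2 = 2*w + (2*p*(2*j) + q*(2*j)^2)" unfolding c by (simp add: power2_eq_square algebra_simps)
      ultimately have "2*q^2 dvd q*(2*w + (2*p*(2*j) + q*(2*j)^2))" using red by metis
      moreover have "q*(2*w + (2*p*(2*j) + q*(2*j)^2)) = (p+(2*j)*q)^2 - z" unfolding e L by (simp add: algebra_simps)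
      ultimately show ?thesis by metis
    next
      case False
      then obtain a where a: "w = 2*a+1" by (elim oddE)
      have "odd p"
      proof
        assume "even p"
        moreover have "even q" using t by simp
        ultimately have "is_unit (2::int)" using cop coprime_common_divisor by blast
        then show False by simp
      qed
      then obtain b where b: "p = 2*b+1" by (elim oddE)
      define c where "c = a + b + t + 1"
      obtain j where j: "2*q dvd 4*(c + p*j)" using G[OF cop] by blast
      have "2*q dvd 4*(c + p*j) + 4*q*j^2 + 4*q*j" using G2[OF j] by simp
      moreover have "4*(c + p*j) + 4*q*j^2 + 4*q*j = 2*w + (2*p*(2*j+1) + q*(2*j+1)^2)"
      proof -
        have "2*w + 2*p + q = 4*c" unfolding c_def a b t by simp
        moreover have "2*w + (2*p*(2*j+1) + q*(2*j+1)^2) = (2*w + 2*p + q) + 4*p*j + 4*q*j^2 + 4*q*j"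
          by (simp add: power2_eq_square algebra_simps)
        ultimately show ?thesis by (simp add: algebra_simps)
      qed
      ultimately have "2*q^2 dvd q*(2*w + (2*p*(2*j+1) + q*(2*j+1)^2))" using red by metis
      moreover have "q*(2*w + (2*p*(2*j+1) + q*(2*j+1)^2)) = (p+(2*j+1)*q)^2 - z" unfolding e L by (simp add: algebra_simps)
      ultimately show ?thesis by metis
    qed
  next
    case 3
    then have L: "LL q = q" by (simp add: LL_def)
    have oq: "odd q"
    proof
      assume "even q"
      then have "q mod 4 = 0 \<or> q mod 4 = 2" by presburger
      then show False using 3 by simp
    qed
    have c1: "coprime (2*p+q) q"
    proof -
      have "coprime (2*p) q" using cop oq by simp
      then show ?thesis by (simp add: coprime_iff_gcd_eq_1)
    qed
    have c2: "coprime (2*p+q) 2" using oq by simp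
    have "coprime (2*p+q) (2*q)" using c1 c2 by simp
    then obtain u v where uv: "u*(2*p+q) + v*(2*q) = 1" using bez by blast
    define k where "k = -u*w"
    have "even (k*(k-1))" by simp
    then obtain m where m: "k*(k-1) = 2*m" by (elim evenE)
    have "w + 2*p*k + q*k^2 = w*(1 - u*(2*p+q)) + q*(k*(k-1))" unfolding k_def by (simp add: power2_eq_square algebra_simps)
    also have "\<dots> = 2*q*(w*v + m)"
    proof -
      have h: "1 - u*(2*p+q) = v*(2*q)" using uv by simp
      show ?thesis unfolding m h by (simp add: algebra_simps)
    qed
    finally have "w + (2*p*k + q*k^2) = 2*q*(w*v + m)" by (simp add: add.assoc)
    then have "2*q dvd w + (2*p*k + q*k^2)" by (metis dvd_triv_left)
    then have "2*q^2 dvd q*(w + (2*p*k + q*k^2))" by (rule red)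
    moreover have "q*(w + (2*p*k + q*k^2)) = (p+k*q)^2 - z" unfolding e L by (simp add: algebra_simps)
    ultimately show ?thesis by metis
  qed
qed

definition Apl :: "int \<Rightarrow> int \<Rightarrow> int" where "Apl p q = (-(p^2)) mod LL q"
definition Aml :: "int \<Rightarrow> int \<Rightarrow> int" where "Aml p q = (p^2) mod LL q"

context
  fixes p q :: int
  assumes cop: "coprime p q" and q2: "q \<ge> 2"
begin

lemma LL_bounds: "q \<le> LL q" "LL q \<le> 4*q"
  using q2 unfolding LL_def by auto

lemma A_facts: "0 < Apl p q" "Apl p q < LL q" "0 < Aml p q" "Aml p q < LL q" "Apl p q + Aml p q = LL q"
proof -
  have Lp: "LL q > 0" using LL_bounds q2 by linarith
  have nz: "p^2 mod LL q \<noteq> 0" using LL_ndvd[OF cop q2] by (simp add: dvd_eq_mod_eq_0)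
  have "Apl p q = LL q - Aml p q" unfolding Apl_def Aml_def using nz by (simp add: zmod_zminus1_eq_if)
  moreover have "0 \<le> Aml p q" "Aml p q < LL q" unfolding Aml_def using Lp by simp_all
  moreover have "Aml p q \<noteq> 0" unfolding Aml_def using nz .
  ultimately show "0 < Apl p q" "Apl p q < LL q" "0 < Aml p q" "Aml p q < LL q" "Apl p q + Aml p q = LL q"
    by linarith+
qed

lemma a_mod: "(2*n*q^2 - (p+m*q)^2) mod LL q = Apl p q"
proof -
  have e1: "2*n*q^2 = (2*q^2)*n" by simp
  have d1: "LL q dvd 2*n*q^2" unfolding e1 using LL_dvd_M[of q] by (rule dvd_mult2)
  have d2: "LL q dvd (p+m*q)^2 - p^2" by (rule LL_dvd_sq[OF cop q2])
  have e2: "2*n*q^2 - (p+m*q)^2 - (-(p^2)) = 2*n*q^2 - ((p+m*q)^2 - p^2)" by simp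
  have "LL q dvd 2*n*q^2 - (p+m*q)^2 - (-(p^2))" unfolding e2 using d1 d2 by (rule dvd_diff)
  then show ?thesis unfolding Apl_def using mod_eq_dvd_iff[of "2*n*q^2 - (p+m*q)^2" "LL q" "-(p^2)"] by blast
qed

lemma a_lower: "2*n*q^2 - (p+m*q)^2 > 0 \<Longrightarrow> 2*n*q^2 - (p+m*q)^2 \<ge> Apl p q"
  using a_mod[of n m] zmod_le_nonneg_dividend[of "2*n*q^2 - (p+m*q)^2" "LL q"] by simp

lemma a_upper: "2*n*q^2 - (p+m*q)^2 < 0 \<Longrightarrow> (p+m*q)^2 - 2*n*q^2 \<ge> Aml p q"
proof -
  assume a: "2*n*q^2 - (p+m*q)^2 < 0"
  have "((p+m*q)^2 - 2*n*q^2) mod LL q = Aml p q"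
  proof -
    have "(-(2*n*q^2 - (p+m*q)^2)) mod LL q = (-(-(p^2))) mod LL q"
      using a_mod[of n m] unfolding Apl_def by (metis mod_minus_eq)
    then show ?thesis unfolding Aml_def by simp
  qed
  then show ?thesis using a zmod_le_nonneg_dividend[of "(p+m*q)^2 - 2*n*q^2" "LL q"] by simp
qed

lemma shift:
  assumes "2*q^2 dvd (p+k0*q)^2 - z"
  shows "\<exists>k. R - 2*q^2 < p + k*q \<and> p + k*q \<le> R \<and> 2*q^2 dvd (p+k*q)^2 - z"
proof -
  define M where "M = 2*q^2"
  have Mp: "M > 0" unfolding M_def using q2 by simp
  define r0 where "r0 = p + k0*q"
  define j where "j = (R - r0) div M"
  define k where "k = k0 + 2*q*j"
  have r: "p + k*q = r0 + M*j" unfolding k_def r0_def M_def by (simp add: power2_eq_square algebra_simps)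
  have dm: "M * j + (R - r0) mod M = R - r0" unfolding j_def by (metis div_mult_mod_eq mult.commute)
  have "0 \<le> (R - r0) mod M" "(R - r0) mod M < M" using Mp by simp_all
  then have b: "M*j \<le> R - r0" "R - r0 < M*j + M" using dm by linarith+
  have "(p+k*q)^2 - z = ((p+k0*q)^2 - z) + M*(2*r0*j + M*j^2)" unfolding r r0_def by (simp add: power2_eq_square algebra_simps)
  moreover have "M dvd M*(2*r0*j + M*j^2)" by simp
  ultimately have "M dvd (p+k*q)^2 - z" using assms unfolding M_def by (metis dvd_add)
  then show ?thesis using b r unfolding M_def by (intro exI[of _ k]) auto
qed

end



lemma lin1: "(A::real) \<ge> 4*B + Lr + 10 \<Longrightarrow> Q \<le> Lr \<Longrightarrow> 0 \<le> Q \<Longrightarrow> 0 \<le> B \<Longrightarrow> C = 2*B \<Longrightarrow> 2*(A - C - 2) - Q > 0"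
  by argo

definition WW :: "int \<Rightarrow> nat \<Rightarrow> real" where
  "WW Q N = of_int Q * (2*(of_int Q * sqrt N - of_int (2*Q^2) - 2) - of_int Q)"

context
  fixes p q :: int
  assumes cop: "coprime p q" and q2: "q \<ge> 2"
begin

lemma exP: "\<exists>k. R - 2*q^2 < p + k*q \<and> p + k*q \<le> R \<and> 2*q^2 dvd (p+k*q)^2 + Apl p q"
proof -
  have "LL q dvd (-(p^2)) - (-(p^2)) mod LL q" using minus_mod_eq_mult_div[of "-(p^2)" "LL q"] by simp
  moreover have "(-(p^2)) - (-(p^2)) mod LL q = (- Apl p q) - p^2" unfolding Apl_def by simp
  ultimately have "LL q dvd (- Apl p q) - p^2" by simp
  then obtain k0 where "2*q^2 dvd (p + k0*q)^2 - (- Apl p q)" using EX[OF cop q2] by blast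
  then have "\<exists>k. R - 2*q^2 < p + k*q \<and> p + k*q \<le> R \<and> 2*q^2 dvd (p+k*q)^2 - (- Apl p q)"
    by (rule shift[OF cop q2])
  then show ?thesis by simp
qed

lemma exM: "\<exists>k. R - 2*q^2 < p + k*q \<and> p + k*q \<le> R \<and> 2*q^2 dvd (p+k*q)^2 - Aml p q"
proof -
  have "LL q dvd (p^2) - (p^2) mod LL q" using minus_mod_eq_mult_div[of "p^2" "LL q"] by simp
  then have "LL q dvd Aml p q - p^2" unfolding Aml_def by (metis dvd_minus_iff minus_diff_eq)
  then obtain k0 where "2*q^2 dvd (p + k0*q)^2 - Aml p q" using EX[OF cop q2] by blast
  then show ?thesis by (rule shift[OF cop q2])
qed

lemma LB:
  fixes N :: nat and y :: real
  assumes N1: "N \<ge> 1" and yf: "y \<in> f2 N"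
  shows "y > of_int p / of_int q \<Longrightarrow> y - of_int p / of_int q \<ge> of_int (Apl p q) / (of_int q^2 * (2*sqrt N + 1))"
    and "y < of_int p / of_int q \<Longrightarrow> of_int p / of_int q - y \<ge> of_int (Aml p q) / (of_int q^2 * (2*sqrt N + 1))"
proof -
  obtain n :: nat where n1: "n \<ge> 1" and n2: "2*n \<le> N" and yint: "y - sqrt (real (2*n)) \<in> \<int>"
    using yf unfolding f2_def by blast
  obtain j where j: "y - sqrt (real (2*n)) = of_int j" using yint Ints_cases by blast
  define t where "t = sqrt (real (2*n))"
  define s where "s = sqrt (real N)"
  define m where "m = -j"
  define c :: real where "c = of_int (p + m*q) / of_int q"
  define a where "a = 2*int n*q^2 - (p + m*q)^2"
  have qpos: "real_of_int q \<ge> 2" using q2 by simp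
  have yx: "y - of_int p / of_int q = t - c"
    using j qpos unfolding t_def c_def m_def by (simp add: field_simps)
  have t2: "t^2 = 2*n" unfolding t_def by simp
  have t1: "t \<ge> 1" unfolding t_def using n1 by simp
  have ts: "t \<le> s" unfolding t_def s_def using n2 by simp
  have aeq: "real_of_int a = of_int q^2 * (t - c) * (t + c)"
  proof -
    have "real_of_int a = 2*n*of_int q^2 - (of_int (p+m*q))^2" unfolding a_def by simp
    also have "\<dots> = of_int q^2 * (t^2 - c^2)" unfolding t2 c_def using qpos by (simp add: field_simps)
    also have "\<dots> = of_int q^2 * (t - c) * (t + c)" by (simp add: power2_eq_square algebra_simps)
    finally show ?thesis .
  qed
  have Lb: "of_int (LL q) \<le> 4 * real_of_int q" using LL_bounds(2)[OF cop q2] by simp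
  have s3: "2*s + 1 \<ge> 3" using ts t1 by simp
  have den: "of_int q^2 * (2*s + 1) \<ge> 3 * of_int q^2"
    using mult_left_mono[OF s3, of "of_int q^2"] by (simp add: mult.commute)
  have den2: "3 * real_of_int q^2 > 4 * of_int q" using qpos by (simp add: power2_eq_square)
  have dpos: "of_int q^2 * (2*s + 1) > 0" using den qpos by simp
  have ApB: "of_int (Apl p q) / (of_int q^2 * (2*s + 1)) \<le> 1"
    using A_facts(2)[OF cop q2] Lb den den2 dpos by (simp add: divide_simps)
  have AmB: "of_int (Aml p q) / (of_int q^2 * (2*s + 1)) \<le> 1"
    using A_facts(4)[OF cop q2] Lb den den2 dpos by (simp add: divide_simps)
  show "y > of_int p / of_int q \<Longrightarrow> y - of_int p / of_int q \<ge> of_int (Apl p q) / (of_int q^2 * (2*sqrt N + 1))"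
  proof -
    assume "y > of_int p / of_int q"
    then have tc: "t > c" using yx by simp
    show ?thesis
    proof (cases "t - c \<ge> 1")
      case True then show ?thesis using ApB yx unfolding s_def by simp
    next
      case False
      then have tc1: "t + c > 0" "t + c \<le> 2*s + 1" using t1 ts tc by simp_all
      have "real_of_int a > 0" unfolding aeq using tc tc1 qpos by simp
      then have "a > 0" by simp
      then have "a \<ge> Apl p q" unfolding a_def using a_lower[OF cop q2] by (simp add: mult.assoc)
      then have "of_int (Apl p q) \<le> of_int q^2 * (t - c) * (t + c)" using aeq by linarith
      also have "\<dots> \<le> of_int q^2 * (t - c) * (2*s+1)" using tc tc1 qpos by (intro mult_left_mono) simp_all
      finally have "of_int (Apl p q) \<le> (t - c) * (of_int q^2 * (2*s+1))" by (simp add: algebra_simps)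
      then show ?thesis using yx dpos unfolding s_def[symmetric] by (simp add: divide_simps)
    qed
  qed
  show "y < of_int p / of_int q \<Longrightarrow> of_int p / of_int q - y \<ge> of_int (Aml p q) / (of_int q^2 * (2*sqrt N + 1))"
  proof -
    assume "y < of_int p / of_int q"
    then have tc: "c > t" using yx by simp
    show ?thesis
    proof (cases "c - t \<ge> 1")
      case True then show ?thesis using AmB yx unfolding s_def by simp
    next
      case False
      then have tc1: "c + t > 0" "c + t \<le> 2*s + 1" using t1 ts tc by simp_all
      have am: "real_of_int (-a) = of_int q^2 * (c - t) * (c + t)" using aeq by (simp add: algebra_simps)
      have "of_int q^2 * (c - t) * (c + t) > 0" using tc tc1 qpos by simp
      then have "real_of_int (-a) > 0" using am by linarith
      then have "a < 0" by simp
      then have "-a \<ge> Aml p q" unfolding a_def using a_upper[OF cop q2] by (simp add: mult.assoc)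
      then have "of_int (Aml p q) \<le> of_int q^2 * (c - t) * (c + t)" using aeq by (simp add: algebra_simps)
      also have "\<dots> \<le> of_int q^2 * (c - t) * (2*s+1)" using tc tc1 qpos by (intro mult_left_mono) simp_all
      finally have "of_int (Aml p q) \<le> (c - t) * (of_int q^2 * (2*s+1))" by (simp add: algebra_simps)
      then have "of_int (Aml p q) / (of_int q^2 * (2*s+1)) \<le> c - t" using dpos by (simp add: pos_divide_le_eq)
      moreover have "of_int p / of_int q - y = c - t" using yx by simp
      ultimately show ?thesis unfolding s_def by simp
    qed
  qed
qed

lemma notnat:
  fixes t :: real and r k :: int
  assumes r: "r = p + k*q" and tn: "t \<in> \<nat>"
  shows "\<bar>t - of_int r / of_int q\<bar> \<ge> 1 / of_int q"
proof -
  obtain K0 :: nat where K0: "t = of_nat K0" using tn Nats_cases by blast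
  define i where "i = q * int K0 - r"
  have "i \<noteq> 0"
  proof
    assume "i = 0"
    then have "p = q * (int K0 - k)" unfolding i_def r by (simp add: algebra_simps)
    then have "q dvd p" by simp
    then have "q dvd 1" using cop coprime_common_divisor[of p q q] by simp
    then show False using q2 zdvd_imp_le by fastforce
  qed
  then have "\<bar>real_of_int i\<bar> \<ge> 1" by linarith
  moreover have "real_of_int i = of_int q * (t - of_int r / of_int q)" unfolding i_def K0 using q2 by (simp add: field_simps)
  ultimately have "1 \<le> of_int q * \<bar>t - of_int r / of_int q\<bar>" using q2 by (simp add: abs_mult)
  then show ?thesis using q2 by (simp add: divide_simps mult.commute)
qed

lemma UBP:
  fixes N :: nat
  assumes big: "of_int q * sqrt N \<ge> of_int (4*q^2 + LL q + 10)"
  shows "\<exists>y \<in> f2 N. y > of_int p / of_int q \<and> y - of_int p / of_int q \<le> of_int (Apl p q) / WW q N"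
proof -
  define s where "s = sqrt N"
  define M where "M = 2*q^2"
  have bigr: "4 * of_int q^2 + of_int (LL q) + 10 \<le> of_int q * sqrt N" using big by simp
  define R where "R = \<lfloor>of_int q * s\<rfloor> - 1"
  obtain k where k1: "R - M < p + k*q" and k2: "p + k*q \<le> R" and kd: "M dvd (p+k*q)^2 + Apl p q"
    using exP unfolding M_def by blast
  define r where "r = p + k*q"
  have qpos: "real_of_int q \<ge> 2" using q2 by simp
  have Rb: "real_of_int R \<le> of_int q * s - 1" "real_of_int R > of_int q * s - 2" unfolding R_def by linarith+
  have rb1: "real_of_int r \<le> of_int q * s - 1" using k2 Rb unfolding r_def by linarith
  have rb2: "real_of_int r > of_int q * s - 2 - of_int M" using k1 Rb unfolding r_def by linarith
  have Lb: "q \<le> LL q" "LL q \<le> 4*q" using LL_bounds[OF cop q2] by auto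
  have AF: "0 < Apl p q" "Apl p q < LL q" using A_facts[OF cop q2] by auto
  have rbig: "real_of_int r \<ge> real_of_int (M + LL q + 8)" using rb2 big unfolding M_def s_def by simp
  then have rbig': "r \<ge> M + LL q + 8" by (simp only: of_int_le_iff)
  have "M \<ge> 0" unfolding M_def by simp
  then have rpos: "r > 0" "r \<ge> LL q" using Lb q2 rbig' by simp_all
  obtain n' where n': "r^2 + Apl p q = M * n'" using kd unfolding r_def by (elim dvdE)
  have "M * n' > 0" unfolding n'[symmetric] using AF by (simp add: add_nonneg_pos)
  then have n'pos: "n' > 0" unfolding M_def using q2 by (simp add: zero_less_mult_iff)
  define n where "n = nat n'"
  have nreal: "real (2*n) = (of_int r^2 + of_int (Apl p q)) / of_int q^2"
  proof -
    have "real_of_int (r^2 + Apl p q) = of_int M * of_int n'" unfolding n' by simp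
    then show ?thesis unfolding n_def M_def using n'pos qpos by (simp add: field_simps)
  qed
  have n1: "n \<ge> 1" unfolding n_def using n'pos by simp
  have s0: "s \<ge> 0" unfolding s_def by simp
  have sN: "s^2 = real N" unfolding s_def by simp
  have n2: "2*n \<le> N"
  proof -
    have "of_int r^2 \<le> (of_int q * s - 1)^2" using rb1 rpos by (intro power_mono) simp_all
    also have "\<dots> = of_int q^2 * real N - 2 * of_int q * s + 1" using sN by (simp add: power2_eq_square algebra_simps)
    finally have "of_int r^2 + of_int (Apl p q) \<le> of_int q^2 * real N - 2 * of_int q * s + 1 + of_int (Apl p q)" by simp
    also have "\<dots> \<le> of_int q^2 * real N"
    proof -
      have "real_of_int (Apl p q) \<le> of_int (LL q)" using AF by simp
      moreover have "(0::real) \<le> of_int q^2" by simp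
      moreover have "real_of_int q * s \<ge> 0" using qpos s0 by simp
      ultimately show ?thesis using bigr unfolding s_def by linarith
    qed
    finally have ineq: "of_int r^2 + of_int (Apl p q) \<le> of_int q^2 * real N" .
    have e: "real (2*n) * of_int q^2 = of_int r^2 + of_int (Apl p q)" unfolding nreal using qpos by simp
    have "real (2*n) * of_int q^2 \<le> real N * of_int q^2" unfolding e using ineq by (simp add: mult.commute)
    then have "real (2*n) \<le> real N" using qpos by simp
    then show ?thesis by linarith
  qed
  define t where "t = sqrt (real (2*n))"
  define c where "c = of_int r / (of_int q :: real)"
  have cpos: "c > 0" unfolding c_def using rpos qpos by simp
  have t2: "t^2 = real (2*n)" unfolding t_def by simp
  have tc2: "t^2 - c^2 = of_int (Apl p q) / of_int q^2" unfolding t2 nreal c_def using qpos by (simp add: field_simps)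
  have "of_int (Apl p q) / of_int q^2 > (0::real)" using AF qpos by simp
  then have "c^2 < t^2" using tc2 by linarith
  moreover have "t \<ge> 0" unfolding t_def by simp
  ultimately have tc: "t > c" by (rule power_less_imp_less_base)
  have prod: "(t - c) * (t + c) = of_int (Apl p q) / of_int q^2" using tc2 by (simp add: power2_eq_square algebra_simps)
  have tcpos: "t + c > 0" using tc cpos by simp
  have tcb: "t - c \<le> of_int (Apl p q) / (2 * of_int q * of_int r)"
  proof -
    have "t - c = ((t - c) * (t + c)) / (t + c)" using tcpos by simp
    also have "\<dots> = of_int (Apl p q) / of_int q^2 / (t + c)" by (simp only: prod)
    also have "\<dots> \<le> of_int (Apl p q) / of_int q^2 / (2*c)" using tc cpos AF qpos by (intro divide_left_mono) simp_all
    also have "\<dots> = of_int (Apl p q) / (2 * of_int q * of_int r)" unfolding c_def using qpos by (simp add: field_simps power2_eq_square)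
    finally show ?thesis .
  qed
  have Wle: "WW q N \<le> 2 * of_int q * of_int r"
  proof -
    have "2*(of_int q * sqrt N - of_int (2*q^2) - 2) - of_int q \<le> 2 * real_of_int r"
      using rb2 qpos unfolding M_def s_def by argo
    from mult_left_mono[OF this, of "of_int q"] qpos show ?thesis unfolding WW_def by (simp add: algebra_simps)
  qed
  have Wpos: "WW q N > 0"
  proof -
    have "real_of_int (LL q) \<ge> of_int q" using Lb by simp
    moreover have "(0::real) \<le> of_int q^2" by simp
    moreover have "real_of_int (2*q^2) = 2 * of_int q^2" by simp
    ultimately have "2*(of_int q * sqrt N - of_int (2*q^2) - 2) - of_int q > 0"
      using lin1[OF bigr] qpos by simp
    then show ?thesis unfolding WW_def using qpos by simp
  qed
  have tcb2: "t - c \<le> of_int (Apl p q) / WW q N"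
  proof -
    have "0 < 2 * of_int q * of_int r * WW q N" using Wpos qpos rpos by simp
    then have "of_int (Apl p q) / (2 * of_int q * of_int r) \<le> of_int (Apl p q) / WW q N"
      using divide_left_mono[OF Wle, of "of_int (Apl p q)"] AF by simp
    then show ?thesis using tcb by linarith
  qed
  have tnn: "t \<notin> \<nat>"
  proof
    assume "t \<in> \<nat>"
    then have "\<bar>t - c\<bar> \<ge> 1 / of_int q" unfolding c_def using notnat[of r k t] r_def by simp
    moreover have "of_int (Apl p q) / (2 * of_int q * of_int r) < (1::real) / of_int q"
    proof -
      have "Apl p q < 2 * r" using AF rpos by simp
      then have h1: "real_of_int (Apl p q) < 2 * of_int r" by linarith
      have "real_of_int r > 0" using rpos by simp
      then show ?thesis using h1 qpos by (simp add: divide_simps)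
    qed
    ultimately show False using tcb tc by simp
  qed
  define y where "y = t - of_int k"
  have yf: "y \<in> f2 N" unfolding f2_def y_def using n1 n2 tnn unfolding t_def by auto
  have yx: "y - of_int p / of_int q = t - c" unfolding y_def c_def r_def using qpos by (simp add: field_simps)
  show ?thesis using yf yx tc tcb2 by (intro bexI[of _ y]) simp_all
qed

lemma UBM:
  fixes N :: nat
  assumes big: "of_int q * sqrt N \<ge> of_int (4*q^2 + LL q + 10)"
  shows "\<exists>y \<in> f2 N. y < of_int p / of_int q \<and> of_int p / of_int q - y \<le> of_int (Aml p q) / WW q N"
proof -
  define s where "s = sqrt N"
  define M where "M = 2*q^2"
  have bigr: "4 * of_int q^2 + of_int (LL q) + 10 \<le> of_int q * sqrt N" using big by simp
  define R where "R = \<lfloor>of_int q * s\<rfloor> - 1"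
  obtain k where k1: "R - M < p + k*q" and k2: "p + k*q \<le> R" and kd: "M dvd (p+k*q)^2 - Aml p q"
    using exM unfolding M_def by blast
  define r where "r = p + k*q"
  have qpos: "real_of_int q \<ge> 2" using q2 by simp
  have Rb: "real_of_int R \<le> of_int q * s - 1" "real_of_int R > of_int q * s - 2" unfolding R_def by linarith+
  have rb1: "real_of_int r \<le> of_int q * s - 1" using k2 Rb unfolding r_def by linarith
  have rb2: "real_of_int r > of_int q * s - 2 - of_int M" using k1 Rb unfolding r_def by linarith
  have Lb: "q \<le> LL q" "LL q \<le> 4*q" using LL_bounds[OF cop q2] by auto
  have AF: "0 < Aml p q" "Aml p q < LL q" using A_facts[OF cop q2] by auto
  have rbig: "real_of_int r \<ge> real_of_int (M + LL q + 8)" using rb2 big unfolding M_def s_def by simp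
  then have rbig': "r \<ge> M + LL q + 8" by (simp only: of_int_le_iff)
  have "M \<ge> 0" unfolding M_def by simp
  then have rpos: "r > 0" "r \<ge> LL q + 8" using Lb q2 rbig' by simp_all
  obtain n' where n': "r^2 - Aml p q = M * n'" using kd unfolding r_def by (elim dvdE)
  have "r^2 \<ge> r" using rpos by (simp add: power2_eq_square)
  then have "M * n' > 0" unfolding n'[symmetric] using AF rpos by simp
  then have n'pos: "n' > 0" unfolding M_def using q2 by (simp add: zero_less_mult_iff)
  define n where "n = nat n'"
  have nreal: "real (2*n) = (of_int r^2 - of_int (Aml p q)) / of_int q^2"
  proof -
    have "real_of_int (r^2 - Aml p q) = of_int M * of_int n'" unfolding n' by simp
    then show ?thesis unfolding n_def M_def using n'pos qpos by (simp add: field_simps)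
  qed
  have n1: "n \<ge> 1" unfolding n_def using n'pos by simp
  have s0: "s \<ge> 0" unfolding s_def by simp
  have sN: "s^2 = real N" unfolding s_def by simp
  have n2: "2*n \<le> N"
  proof -
    have "of_int r^2 \<le> (of_int q * s - 1)^2" using rb1 rpos by (intro power_mono) simp_all
    also have "\<dots> = of_int q^2 * real N - 2 * of_int q * s + 1" using sN by (simp add: power2_eq_square algebra_simps)
    also have "\<dots> \<le> of_int q^2 * real N"
    proof -
      have "real_of_int (LL q) \<ge> 0" using Lb q2 by simp
      moreover have "(of_int q::real)^2 \<ge> 0" by simp
      ultimately have "real_of_int q * s \<ge> 1" using bigr unfolding s_def by linarith
      then show ?thesis by linarith
    qed
    finally have ineq: "of_int r^2 - of_int (Aml p q) \<le> of_int q^2 * real N" using AF by simp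
    have e: "real (2*n) * of_int q^2 = of_int r^2 - of_int (Aml p q)" unfolding nreal using qpos by simp
    have "real (2*n) * of_int q^2 \<le> real N * of_int q^2" unfolding e using ineq by (simp add: mult.commute)
    then have "real (2*n) \<le> real N" using qpos by simp
    then show ?thesis by linarith
  qed
  define t where "t = sqrt (real (2*n))"
  define c where "c = of_int r / (of_int q :: real)"
  have cpos: "c > 0" unfolding c_def using rpos qpos by simp
  have t2: "t^2 = real (2*n)" unfolding t_def by simp
  have t0: "t \<ge> 0" unfolding t_def by simp
  have tc2: "c^2 - t^2 = of_int (Aml p q) / of_int q^2" unfolding t2 nreal c_def using qpos by (simp add: field_simps)
  have "of_int (Aml p q) / of_int q^2 > (0::real)" using AF qpos by simp
  then have "t^2 < c^2" using tc2 by linarith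
  then have tc: "t < c" using cpos by (intro power_less_imp_less_base[of t 2 c]) simp_all
  have prod: "(c - t) * (c + t) = of_int (Aml p q) / of_int q^2" using tc2 by (simp add: power2_eq_square algebra_simps)
  have tcpos: "c + t > 0" using t0 cpos by simp
  have ct: "c - t = of_int (Aml p q) / of_int q^2 / (c + t)"
  proof -
    have "c - t = ((c - t) * (c + t)) / (c + t)" using tcpos by simp
    also have "\<dots> = of_int (Aml p q) / of_int q^2 / (c + t)" by (simp only: prod)
    finally show ?thesis .
  qed
  have rr: "real_of_int r > 0" using rpos by simp
  have tcb0: "c - t \<le> of_int (Aml p q) / (of_int q * of_int r)"
  proof -
    have "of_int (Aml p q) / of_int q^2 / (c + t) \<le> of_int (Aml p q) / of_int q^2 / c"
      using t0 cpos AF qpos by (intro divide_left_mono) simp_all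
    also have "\<dots> = of_int (Aml p q) / (of_int q * of_int r)" unfolding c_def using qpos by (simp add: field_simps power2_eq_square)
    finally show ?thesis using ct by simp
  qed
  have small: "of_int (Aml p q) / (of_int q * of_int r) < (1::real) / of_int q"
  proof -
    have "Aml p q < r" using AF rpos by simp
    then have h1: "real_of_int (Aml p q) < of_int r" by linarith
    then show ?thesis using rr qpos by (simp add: divide_simps)
  qed
  have ct1: "c - t < 1"
  proof -
    have "c - t < 1 / of_int q" using tcb0 small by linarith
    moreover have "1 / of_int q \<le> (1::real)" using qpos by simp
    ultimately show ?thesis by linarith
  qed
  have tcb: "c - t \<le> of_int (Aml p q) / (of_int q * (2 * of_int r - of_int q))"
  proof -
    have "r \<ge> q" using rpos Lb by simp
    then have "real_of_int r \<ge> of_int q" by simp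
    then have "c \<ge> 1" unfolding c_def using qpos by simp
    then have "2*c - 1 > 0" by simp
    have "of_int (Aml p q) / of_int q^2 / (c + t) \<le> of_int (Aml p q) / of_int q^2 / (2*c - 1)"
      using ct1 \<open>2*c - 1 > 0\<close> AF qpos by (intro divide_left_mono) simp_all
    also have "\<dots> = of_int (Aml p q) / (of_int q * (2 * of_int r - of_int q))" unfolding c_def using qpos by (simp add: field_simps power2_eq_square)
    finally show ?thesis using ct by simp
  qed
  have Wle: "WW q N \<le> of_int q * (2 * of_int r - of_int q)"
  proof -
    have "2*(of_int q * sqrt N - of_int (2*q^2) - 2) - of_int q \<le> 2 * real_of_int r - of_int q"
      using rb2 qpos unfolding M_def s_def by argo
    from mult_left_mono[OF this, of "of_int q"] qpos show ?thesis unfolding WW_def by (simp add: algebra_simps)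
  qed
  have Wpos: "WW q N > 0"
  proof -
    have "real_of_int (LL q) \<ge> of_int q" using Lb by simp
    moreover have "(0::real) \<le> of_int q^2" by simp
    moreover have "real_of_int (2*q^2) = 2 * of_int q^2" by simp
    ultimately have "2*(of_int q * sqrt N - of_int (2*q^2) - 2) - of_int q > 0"
      using lin1[OF bigr] qpos by simp
    then show ?thesis unfolding WW_def using qpos by simp
  qed
  have tcb2: "c - t \<le> of_int (Aml p q) / WW q N"
  proof -
    have "0 < of_int q * (2 * of_int r - of_int q) * WW q N" using Wpos Wle by simp
    then have "of_int (Aml p q) / (of_int q * (2 * of_int r - of_int q)) \<le> of_int (Aml p q) / WW q N"
      using divide_left_mono[OF Wle, of "of_int (Aml p q)"] AF by simp
    then show ?thesis using tcb by linarith
  qed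
  have tnn: "t \<notin> \<nat>"
  proof
    assume "t \<in> \<nat>"
    then have "\<bar>t - c\<bar> \<ge> 1 / of_int q" unfolding c_def using notnat[of r k t] r_def by simp
    then show False using tcb0 small tc by simp
  qed
  define y where "y = t - of_int k"
  have yf: "y \<in> f2 N" unfolding f2_def y_def using n1 n2 tnn unfolding t_def by auto
  have yx: "of_int p / of_int q - y = c - t" unfolding y_def c_def r_def using qpos by (simp add: field_simps)
  show ?thesis using yf yx tc tcb2 by (intro bexI[of _ y]) simp_all
qed

end


context
  fixes p q :: int
  assumes cop: "coprime p q" and q2: "q \<ge> 2"
begin

lemma gap_bounds:
  fixes N :: nat
  assumes N1: "N \<ge> 1" and big: "of_int q * sqrt N \<ge> of_int (4*q^2 + LL q + 10)"
  shows "of_int (LL q) / (of_int q^2 * (2*sqrt N + 1)) \<le> gap (of_int p / of_int q) (f2 N)"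
    and "gap (of_int p / of_int q) (f2 N) \<le> of_int (LL q) / WW q N"
proof -
  define x :: real where "x = of_int p / of_int q"
  define D where "D = of_int q^2 * (2*sqrt N + 1)"
  define Sp where "Sp = {y \<in> f2 N. y > x}"
  define Sm where "Sm = {y \<in> f2 N. y < x}"
  obtain y1 where y1: "y1 \<in> f2 N" "y1 > x" "y1 - x \<le> of_int (Apl p q) / WW q N"
    using UBP[OF cop q2 big] unfolding x_def by blast
  obtain y2 where y2: "y2 \<in> f2 N" "y2 < x" "x - y2 \<le> of_int (Aml p q) / WW q N"
    using UBM[OF cop q2 big] unfolding x_def by blast
  have Spne: "Sp \<noteq> {}" using y1 unfolding Sp_def by blast
  have Smne: "Sm \<noteq> {}" using y2 unfolding Sm_def by blast
  have Spb: "bdd_below Sp" unfolding Sp_def by (rule bdd_belowI[of _ x]) auto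
  have Smb: "bdd_above Sm" unfolding Sm_def by (rule bdd_aboveI[of _ x]) auto
  have I1: "x + of_int (Apl p q) / D \<le> Inf Sp"
  proof (rule cInf_greatest[OF Spne])
    fix y assume "y \<in> Sp"
    then have "y \<in> f2 N" "y > x" unfolding Sp_def by auto
    then show "x + of_int (Apl p q) / D \<le> y" using LB(1)[OF cop q2 N1, of y] unfolding x_def D_def by simp
  qed
  have I2: "Inf Sp \<le> y1" using y1 Spb unfolding Sp_def by (intro cInf_lower) auto
  have S1: "Sup Sm \<le> x - of_int (Aml p q) / D"
  proof (rule cSup_least[OF Smne])
    fix y assume "y \<in> Sm"
    then have "y \<in> f2 N" "y < x" unfolding Sm_def by auto
    then show "y \<le> x - of_int (Aml p q) / D" using LB(2)[OF cop q2 N1, of y] unfolding x_def D_def by simp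
  qed
  have S2: "y2 \<le> Sup Sm" using y2 Smb unfolding Sm_def by (intro cSup_upper) auto
  have g: "gap x (f2 N) = Inf Sp - Sup Sm" unfolding gap_def Sp_def Sm_def by simp
  have Ls: "real_of_int (LL q) = of_int (Apl p q) + of_int (Aml p q)" using A_facts(5)[OF cop q2] by simp
  have "of_int (LL q) / D = of_int (Apl p q) / D + of_int (Aml p q) / D" unfolding Ls by (simp add: add_divide_distrib)
  then show "of_int (LL q) / (of_int q^2 * (2*sqrt N + 1)) \<le> gap (of_int p / of_int q) (f2 N)"
    using I1 S1 g unfolding x_def D_def by linarith
  have "of_int (LL q) / WW q N = of_int (Apl p q) / WW q N + of_int (Aml p q) / WW q N" unfolding Ls by (simp add: add_divide_distrib)
  then show "gap (of_int p / of_int q) (f2 N) \<le> of_int (LL q) / WW q N"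
    using I2 S2 y1 y2 g unfolding x_def by linarith
qed

end

theorem mainTheorem2:
  fixes p q :: int
  assumes "coprime p q" and "q \<ge> 2"
  shows "(\<lambda>N::nat. 2 * sqrt (real N) * gap (real_of_int p / real_of_int q) (f2 N))
           \<longlonglongrightarrow> (if q mod 4 = 2 then 4 / real_of_int q
                else if q mod 4 = 0 then 2 / real_of_int q
                else 1 / real_of_int q)"
proof -
  note cop = assms(1) and q2 = assms(2)
  define L where "L = real_of_int (LL q)"
  have qpos: "real_of_int q \<ge> 2" using q2 by simp
  have target: "(if q mod 4 = 2 then 4 / real_of_int q
                else if q mod 4 = 0 then 2 / real_of_int q
                else 1 / real_of_int q) = L / of_int q^2"
    unfolding L_def LL_def using qpos by (auto simp: power2_eq_square)
  have hs: "filterlim (\<lambda>N. sqrt (real N)) at_top sequentially"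
    by (rule filterlim_compose[OF sqrt_at_top filterlim_real_sequentially])
  have hinv: "(\<lambda>N. inverse (sqrt (real N))) \<longlonglongrightarrow> 0"
    by (rule tendsto_inverse_0_at_top[OF hs])
  define C where "C = real_of_int (4*q^2 + LL q + 10)"
  define E where "E = 2 * real_of_int (2*q^2) + 4 + real_of_int q"
  have ev1: "eventually (\<lambda>N. N \<ge> 1) sequentially" by (rule eventually_ge_at_top)
  have ev2: "eventually (\<lambda>N. sqrt (real N) \<ge> C) sequentially" using hs unfolding filterlim_at_top by blast
  have ev3: "eventually (\<lambda>N. sqrt (real N) \<ge> 1) sequentially" using hs unfolding filterlim_at_top by blast
  have Cnn: "C \<ge> 0" unfolding C_def using LL_bounds[OF cop q2] q2 by simp
  have Lnn: "L \<ge> 0" unfolding L_def using LL_bounds[OF cop q2] q2 by simp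
  have evb: "eventually (\<lambda>N. N \<ge> 1 \<and> of_int q * sqrt N \<ge> of_int (4*q^2 + LL q + 10) \<and> sqrt (real N) \<ge> 1) sequentially"
    using ev1 ev2 ev3
  proof eventually_elim
    case (elim N)
    have h: "of_int q * sqrt N \<ge> 1 * sqrt N" using qpos elim(3) by (intro mult_right_mono) simp_all
    have h2: "of_int (4*q^2 + LL q + 10) \<le> of_int q * sqrt N" using elim(2) h unfolding C_def by linarith
    show ?case using elim(1,3) h2 by blast
  qed
  define g1 where "g1 N = 2 * sqrt (real N) * (L / (of_int q^2 * (2*sqrt N + 1)))" for N :: nat
  define g2 where "g2 N = 2 * sqrt (real N) * (L / WW q N)" for N :: nat
  define G where "G N = 2 * sqrt (real N) * gap (real_of_int p / real_of_int q) (f2 N)" for N :: nat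
  have lo: "eventually (\<lambda>N. g1 N \<le> G N) sequentially"
    using evb
  proof eventually_elim
    case (elim N)
    then show ?case unfolding g1_def G_def L_def
      using gap_bounds(1)[OF cop q2, of N] by (intro mult_left_mono) simp_all
  qed
  have up: "eventually (\<lambda>N. G N \<le> g2 N) sequentially"
    using evb
  proof eventually_elim
    case (elim N)
    then show ?case unfolding g2_def G_def L_def
      using gap_bounds(2)[OF cop q2, of N] by (intro mult_left_mono) simp_all
  qed
  have g1e: "eventually (\<lambda>N. (L / of_int q^2) * (2 / (2 + inverse (sqrt (real N)))) = g1 N) sequentially"
    using evb
  proof eventually_elim
    case (elim N)
    then have "sqrt (real N) > 0" by simp
    then show ?case unfolding g1_def using qpos by (simp add: field_simps)
  qed
  have g2e: "eventually (\<lambda>N. 2 * L / (of_int q * (2 * of_int q - E * inverse (sqrt (real N)))) = g2 N) sequentially"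
    using evb
  proof eventually_elim
    case (elim N)
    then have "sqrt (real N) > 0" by simp
    then show ?case unfolding g2_def WW_def E_def using qpos by (simp add: field_simps)
  qed
  have l1: "(\<lambda>N. (L / of_int q^2) * (2 / (2 + inverse (sqrt (real N))))) \<longlonglongrightarrow> (L / of_int q^2) * (2 / (2 + 0))"
    by (intro tendsto_intros hinv) simp
  have l2: "(\<lambda>N. 2 * L / (of_int q * (2 * of_int q - E * inverse (sqrt (real N))))) \<longlonglongrightarrow> 2 * L / (of_int q * (2 * of_int q - E * 0))"
    using qpos by (intro tendsto_intros hinv) simp
  have l1': "g1 \<longlonglongrightarrow> L / of_int q^2" using tendsto_cong[OF g1e] l1 by simp
  have l2': "g2 \<longlonglongrightarrow> L / of_int q^2" using tendsto_cong[OF g2e] l2 qpos by (simp add: power2_eq_square)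
  have "G \<longlonglongrightarrow> L / of_int q^2" by (rule tendsto_sandwich[OF lo up l1' l2'])
  then show ?thesis unfolding target G_def .
qed

end
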